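(* Let $\mathfrak{C}=(U,M,I,N,J)$ be a formal decision context. Then the set of necessary II-decision rules of $\mathfrak{C}$ is $$\overline{\mathfrak{R}}_{II}(\mathfrak{C})=\{(O^{\square_M\lozenge_M},O^{\square_M})\rightarrow(\cap[O]_{S_2},(\cap[O]_{S_2})^{\lozenge_N})\mid O\in\mathrm{Ext}L_P(\mathfrak{C}_N)\}.$$
   Context: Formal context $(U,M,I)$: $U$ and $M$ are finite nonempty sets and $I\subseteq U\times M$. For $O\subseteq U$ and $C\subseteq M$ define: - $O^{\lozenge}=\{a\in M\mid\exists x\in O\,((x,a)\in I)\}$ and $C^{\square}=\{x\in U\mid \forall a\in M\,((x,a)\in I\Rightarrow a\in C)\}$; - $O^{\square}=\{a\in M\mid \forall x\in U\,((x,a)\in I\Rightarrow x\in O)\}$ and $C^{\lozenge}=\{x\in U\mid \exists a\in C\,((x,a)\in I)\}$. An object-oriented concept is a pair $(O,C)$ with $O^\square=C$ and $C^\lozenge=O$ (set $L_O$). A property-oriented concept is a pair $(O,C)$ with $O^\lozenge=C$ and $C^\square=O$ (set $L_P$). $\mathrm{Ext}$ denotes the set of extents. Standing assumption: contexts are canonical, i.e. every object has at least one attribute and not all attributes, and every attribute is possessed by at least one object and not by all objects. A formal decision context $\mathfrak{C}=(U,M,I,N,J)$ has conditional context $\mathfrak{C}_M=(U,M,I)$ and decision context $\mathfrak{C}_N=(U,N,J)$, with $M\cap N=\emptyset$. Subscripts $M$ and $N$ indicate the context in which an operator is computed. A II-decision rule is $(O,C)\rightarrow(Y,D)$ with $(O,C)\in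 L_O(\mathfrak{C}_M)$, $(Y,D)\in L_P(\mathfrak{C}_N)$ and $O\subseteq Y$; the set of these is $\mathfrak{R}_{II}(\mathfrak{C})$. Implication: $(O_1,C_1)\rightarrow(Y_1,D_1)\Rightarrow(O_2,C_2)\rightarrow(Y_2,D_2)$ iff $O_2\subseteq O_1\subseteq Y_1\subseteq Y_2$. A rule $r$ is necessary if there is no $r_1\in\mathfrak{R}_{II}(\mathfrak{C})\setminus\{r\}$ with $r_1\Rightarrow r$. $S_2$ is the equivalence relation on $\mathrm{Ext}L_P(\mathfrak{C}_N)$ given by $(O,Y)\in S_2$ iff $O^{\square_M}=Y^{\square_M}$. $[O]_{S_2}$ is the class of $O$, and $\cap[O]_{S_2}$ is the intersection of its members. *)

theory Defs
  imports Main
begin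

definition formal_context :: "'u set \<Rightarrow> 'm set \<Rightarrow> ('u \<times> 'm) set \<Rightarrow> bool" where
  "formal_context U M I \<longleftrightarrow> finite U \<and> U \<noteq> {} \<and> finite M \<and> M \<noteq> {} \<and> I \<subseteq> U \<times> M"

definition canonical :: "'u set \<Rightarrow> 'm set \<Rightarrow> ('u \<times> 'm) set \<Rightarrow> bool" where
  "canonical U M I \<longleftrightarrow>
     (\<forall>x\<in>U. (\<exists>a\<in>M. (x,a) \<in> I) \<and> (\<exists>a\<in>M. (x,a) \<notin> I)) \<and>
     (\<forall>a\<in>M. (\<exists>x\<in>U. (x,a) \<in> I) \<and> (\<exists>x\<in>U. (x,a) \<notin> I))"

definition dia_obj :: "'u set \<Rightarrow> 'm set \<Rightarrow> ('u \<times> 'm) set \<Rightarrow> 'u set \<Rightarrow> 'm set" where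
  "dia_obj U M I X = {a \<in> M. \<exists>x\<in>X. (x,a) \<in> I}"

definition box_attr :: "'u set \<Rightarrow> 'm set \<Rightarrow> ('u \<times> 'm) set \<Rightarrow> 'm set \<Rightarrow> 'u set" where
  "box_attr U M I C = {x \<in> U. \<forall>a\<in>M. (x,a) \<in> I \<longrightarrow> a \<in> C}"

definition box_obj :: "'u set \<Rightarrow> 'm set \<Rightarrow> ('u \<times> 'm) set \<Rightarrow> 'u set \<Rightarrow> 'm set" where
  "box_obj U M I X = {a \<in> M. \<forall>x\<in>U. (x,a) \<in> I \<longrightarrow> x \<in> X}"

definition dia_attr :: "'u set \<Rightarrow> 'm set \<Rightarrow> ('u \<times> 'm) set \<Rightarrow> 'm set \<Rightarrow> 'u set" where
  "dia_attr U M I C = {x \<in> U. \<exists>a\<in>C. (x,a) \<in> I}"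

definition L_O :: "'u set \<Rightarrow> 'm set \<Rightarrow> ('u \<times> 'm) set \<Rightarrow> ('u set \<times> 'm set) set" where
  "L_O U M I = {(X, C). X \<subseteq> U \<and> C \<subseteq> M \<and> box_obj U M I X = C \<and> dia_attr U M I C = X}"

definition L_P :: "'u set \<Rightarrow> 'm set \<Rightarrow> ('u \<times> 'm) set \<Rightarrow> ('u set \<times> 'm set) set" where
  "L_P U M I = {(X, C). X \<subseteq> U \<and> C \<subseteq> M \<and> dia_obj U M I X = C \<and> box_attr U M I C = X}"

definition Ext :: "('u set \<times> 'm set) set \<Rightarrow> 'u set set" where
  "Ext L = fst ` L"

(* A II-decision rule (X,C) \<rightarrow> (Y,D) is represented as the pair ((X,C),(Y,D)). *)
type_synonym ('u,'m,'n) rule = "('u set \<times> 'm set) \<times> ('u set \<times> 'n set)"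

definition rules_II ::
  "'u set \<Rightarrow> 'm set \<Rightarrow> ('u \<times> 'm) set \<Rightarrow> 'n set \<Rightarrow> ('u \<times> 'n) set \<Rightarrow> ('u,'m,'n) rule set" where
  "rules_II U M I N J =
     {((X, C), (Y, D)). (X, C) \<in> L_O U M I \<and> (Y, D) \<in> L_P U N J \<and> X \<subseteq> Y}"

definition rule_implies :: "('u,'m,'n) rule \<Rightarrow> ('u,'m,'n) rule \<Rightarrow> bool" where
  "rule_implies r1 r2 \<longleftrightarrow>
     fst (fst r2) \<subseteq> fst (fst r1) \<and> fst (fst r1) \<subseteq> fst (snd r1) \<and> fst (snd r1) \<subseteq> fst (snd r2)"

definition necessary_rules_II ::
  "'u set \<Rightarrow> 'm set \<Rightarrow> ('u \<times> 'm) set \<Rightarrow> 'n set \<Rightarrow> ('u \<times> 'n) set \<Rightarrow> ('u,'m,'n) rule set" where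
  "necessary_rules_II U M I N J =
     {r \<in> rules_II U M I N J. \<not> (\<exists>r1 \<in> rules_II U M I N J - {r}. rule_implies r1 r)}"

definition S2_class ::
  "'u set \<Rightarrow> 'm set \<Rightarrow> ('u \<times> 'm) set \<Rightarrow> 'n set \<Rightarrow> ('u \<times> 'n) set \<Rightarrow> 'u set \<Rightarrow> 'u set set" where
  "S2_class U M I N J X =
     {Y \<in> Ext (L_P U N J). box_obj U M I X = box_obj U M I Y}"

end

theory Submission
  imports Defs
begin

lemma box_obj_mono: "A \<subseteq> B \<Longrightarrow> box_obj U M I A \<subseteq> box_obj U M I B"
  unfolding box_obj_def by auto
lemma dia_attr_mono: "A \<subseteq> B \<Longrightarrow> dia_attr U M I A \<subseteq> dia_attr U M I B"
  unfolding dia_attr_def by auto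
lemma dia_obj_mono: "A \<subseteq> B \<Longrightarrow> dia_obj U M I A \<subseteq> dia_obj U M I B"
  unfolding dia_obj_def by auto
lemma box_attr_mono: "A \<subseteq> B \<Longrightarrow> box_attr U M I A \<subseteq> box_attr U M I B"
  unfolding box_attr_def by auto

lemma int_sub: "dia_attr U M I (box_obj U M I Z) \<subseteq> Z \<inter> U"
  unfolding dia_attr_def box_obj_def by auto
lemma box_dia: "I \<subseteq> U \<times> M \<Longrightarrow> C \<subseteq> M \<Longrightarrow> C \<subseteq> box_obj U M I (dia_attr U M I C)"
  unfolding dia_attr_def box_obj_def by auto
lemma cl_sup: "I \<subseteq> U \<times> M \<Longrightarrow> Z \<subseteq> U \<Longrightarrow> Z \<subseteq> box_attr U M I (dia_obj U M I Z)"
  unfolding dia_obj_def box_attr_def by auto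
lemma dia_box: "dia_obj U M I (box_attr U M I D) \<subseteq> D"
  unfolding dia_obj_def box_attr_def by auto

lemma box_obj_sub: "box_obj U M I Z \<subseteq> M"
  unfolding box_obj_def by blast

lemma box_int:
  assumes IM: "I \<subseteq> U \<times> M"
  shows "box_obj U M I (dia_attr U M I (box_obj U M I Z)) = box_obj U M I Z"
proof (rule subset_antisym)
  have "box_obj U M I (dia_attr U M I (box_obj U M I Z)) \<subseteq> box_obj U M I (Z \<inter> U)"
    by (rule box_obj_mono[OF int_sub])
  also have "\<dots> \<subseteq> box_obj U M I Z" by (rule box_obj_mono) (rule Int_lower1)
  finally show "box_obj U M I (dia_attr U M I (box_obj U M I Z)) \<subseteq> box_obj U M I Z" .
  show "box_obj U M I Z \<subseteq> box_obj U M I (dia_attr U M I (box_obj U M I Z))"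
    by (rule box_dia[OF IM box_obj_sub])
qed

lemma dia_cl:
  assumes "I \<subseteq> U \<times> M" "Z \<subseteq> U"
  shows "dia_obj U M I (box_attr U M I (dia_obj U M I Z)) = dia_obj U M I Z"
proof (rule subset_antisym)
  show "dia_obj U M I (box_attr U M I (dia_obj U M I Z)) \<subseteq> dia_obj U M I Z"
    by (rule dia_box)
  show "dia_obj U M I Z \<subseteq> dia_obj U M I (box_attr U M I (dia_obj U M I Z))"
    by (rule dia_obj_mono[OF cl_sup[OF assms]])
qed

lemma dia_attr_sub: "dia_attr U M I C \<subseteq> U"
  unfolding dia_attr_def by blast
lemma box_attr_sub: "box_attr U M I C \<subseteq> U"
  unfolding box_attr_def by blast
lemma dia_obj_sub: "dia_obj U M I C \<subseteq> M"
  unfolding dia_obj_def by blast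

lemma LO_int: "I \<subseteq> U \<times> M \<Longrightarrow> (dia_attr U M I (box_obj U M I Z), box_obj U M I Z) \<in> L_O U M I"
  unfolding L_O_def using box_int[of I U M Z] by (simp add: dia_attr_sub box_obj_sub)

lemma LP_cl: "I \<subseteq> U \<times> M \<Longrightarrow> Z \<subseteq> U \<Longrightarrow>
   (box_attr U M I (dia_obj U M I Z), dia_obj U M I (box_attr U M I (dia_obj U M I Z))) \<in> L_P U M I"
  unfolding L_P_def using dia_cl[of I U M Z] by (simp add: box_attr_sub dia_obj_sub)

lemma LO_iff: "(X, C) \<in> L_O U M I \<longleftrightarrow> X \<subseteq> U \<and> C \<subseteq> M \<and> box_obj U M I X = C \<and> dia_attr U M I C = X"
  unfolding L_O_def by auto

lemma LP_iff: "(X, C) \<in> L_P U M I \<longleftrightarrow> X \<subseteq> U \<and> C \<subseteq> M \<and> dia_obj U M I X = C \<and> box_attr U M I C = X"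
  unfolding L_P_def by auto

lemma LO_D: assumes "(X, C) \<in> L_O U M I"
  shows "C = box_obj U M I X" "dia_attr U M I (box_obj U M I X) = X" "X \<subseteq> U"
  using assms unfolding L_O_def by auto

lemma LP_D: assumes "(Y, D) \<in> L_P U M I"
  shows "D = dia_obj U M I Y" "box_attr U M I (dia_obj U M I Y) = Y" "Y \<subseteq> U"
  using assms unfolding L_P_def by auto

lemma ExtLP_iff: "Q \<in> Ext (L_P U M I) \<longleftrightarrow> Q \<subseteq> U \<and> box_attr U M I (dia_obj U M I Q) = Q"
proof
  assume "Q \<in> Ext (L_P U M I)"
  then obtain p where p: "p \<in> L_P U M I" "Q = fst p" unfolding Ext_def by blast
  obtain A C where "p = (A, C)" by (cases p)
  with p have "(Q, C) \<in> L_P U M I" by simp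
  then show "Q \<subseteq> U \<and> box_attr U M I (dia_obj U M I Q) = Q" unfolding LP_iff by simp
next
  assume a: "Q \<subseteq> U \<and> box_attr U M I (dia_obj U M I Q) = Q"
  then have "(Q, dia_obj U M I Q) \<in> L_P U M I" unfolding LP_iff by (simp add: dia_obj_sub)
  then have "fst (Q, dia_obj U M I Q) \<in> fst ` L_P U M I" by (rule imageI)
  then show "Q \<in> Ext (L_P U M I)" unfolding Ext_def by simp
qed

lemma ExtLP_cl: "I \<subseteq> U \<times> M \<Longrightarrow> Z \<subseteq> U \<Longrightarrow> box_attr U M I (dia_obj U M I Z) \<in> Ext (L_P U M I)"
  unfolding ExtLP_iff by (simp add: box_attr_sub dia_cl)

lemma closed_min: "box_attr U M I (dia_obj U M I Y) = Y \<Longrightarrow> Z \<subseteq> Y \<Longrightarrow>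
   box_attr U M I (dia_obj U M I Z) \<subseteq> Y"
  using box_attr_mono[OF dia_obj_mono, of Z Y U M I U M I] by simp

lemma open_max: "dia_attr U M I (box_obj U M I X) = X \<Longrightarrow> X \<subseteq> Z \<Longrightarrow>
   X \<subseteq> dia_attr U M I (box_obj U M I Z)"
  using dia_attr_mono[OF box_obj_mono, of X Z U M I U M I] by simp

lemma class_inter:
  assumes IM: "I \<subseteq> U \<times> M" and JN: "J \<subseteq> U \<times> N" and Q: "Q \<in> Ext (L_P U N J)"
  shows "\<Inter> (S2_class U M I N J Q) =
     box_attr U N J (dia_obj U N J (dia_attr U M I (box_obj U M I Q)))"
    (is "_ = ?c")
proof -
  let ?i = "dia_attr U M I (box_obj U M I Q)"
  have OU: "Q \<subseteq> U" and Ocl: "box_attr U N J (dia_obj U N J Q) = Q" using Q unfolding ExtLP_iff by auto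
  have iO: "?i \<subseteq> Q" using int_sub[of U M I Q] by blast
  have iU: "?i \<subseteq> U" using int_sub[of U M I Q] by blast
  have ic: "?i \<subseteq> ?c" using cl_sup[OF JN iU] .
  have cO: "?c \<subseteq> Q" using closed_min[OF Ocl iO] .
  have "box_obj U M I ?c = box_obj U M I Q"
  proof
    show "box_obj U M I ?c \<subseteq> box_obj U M I Q" using box_obj_mono[OF cO] .
    have "box_obj U M I ?i \<subseteq> box_obj U M I ?c" using box_obj_mono[OF ic] .
    then show "box_obj U M I Q \<subseteq> box_obj U M I ?c" using box_int[OF IM, of Q] by simp
  qed
  then have "?c \<in> S2_class U M I N J Q"
    unfolding S2_class_def using ExtLP_cl[OF JN iU] by simp
  then have 1: "\<Inter> (S2_class U M I N J Q) \<subseteq> ?c" by blast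
  have "?c \<subseteq> Y" if Y: "Y \<in> S2_class U M I N J Q" for Y
  proof -
    have Ycl: "box_attr U N J (dia_obj U N J Y) = Y" and b: "box_obj U M I Q = box_obj U M I Y"
      using Y unfolding S2_class_def ExtLP_iff by auto
    have "?i \<subseteq> Y" using b int_sub[of U M I Y] by simp
    then show ?thesis by (rule closed_min[OF Ycl])
  qed
  then have "?c \<subseteq> \<Inter> (S2_class U M I N J Q)" by (rule Inter_greatest)
  then show ?thesis using 1 by (rule subset_antisym[rotated])
qed

lemma rules_iff: "((X, C), (Y, D)) \<in> rules_II U M I N J \<longleftrightarrow>
   (X, C) \<in> L_O U M I \<and> (Y, D) \<in> L_P U N J \<and> X \<subseteq> Y"
  unfolding rules_II_def by auto

theorem theorem4p4:
  fixes U :: "'u set" and M :: "'m set" and I :: "('u \<times> 'm) set"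
    and N :: "'n set" and J :: "('u \<times> 'n) set"
  assumes "formal_context U M I" and "formal_context U N J"
    and "canonical U M I" and "canonical U N J"
  shows "necessary_rules_II U M I N J =
    {((dia_attr U M I (box_obj U M I X), box_obj U M I X),
      (\<Inter> (S2_class U M I N J X), dia_obj U N J (\<Inter> (S2_class U M I N J X)))) | X.
      X \<in> Ext (L_P U N J)}"
proof -
  have IM: "I \<subseteq> U \<times> M" and JN: "J \<subseteq> U \<times> N"
    using assms(1,2) unfolding formal_context_def by auto
  let ?int = "\<lambda>Z. dia_attr U M I (box_obj U M I Z)"
  let ?cl = "\<lambda>Z. box_attr U N J (dia_obj U N J Z)"
  show ?thesis
  proof (intro set_eqI iffI)
    fix r assume r: "r \<in> necessary_rules_II U M I N J"
    obtain X C Y D where rr: "r = ((X, C), (Y, D))" by (metis prod.collapse)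
    have rin: "r \<in> rules_II U M I N J" and nn: "\<And>r1. r1 \<in> rules_II U M I N J \<Longrightarrow> r1 \<noteq> r \<Longrightarrow> \<not> rule_implies r1 r"
      using r unfolding necessary_rules_II_def by auto
    have XC: "(X, C) \<in> L_O U M I" and YD: "(Y, D) \<in> L_P U N J" and XY: "X \<subseteq> Y"
      using rin unfolding rr rules_iff by auto
    have C: "C = box_obj U M I X" and Xo: "?int X = X" and XU: "X \<subseteq> U"
      using LO_D[OF XC] by auto
    have D: "D = dia_obj U N J Y" and Ycl: "?cl Y = Y" and YU: "Y \<subseteq> U"
      using LP_D[OF YD] by auto
    define r1 where "r1 = ((?int Y, box_obj U M I Y), (Y, D))"
    have "r1 \<in> rules_II U M I N J"
      unfolding r1_def rules_iff using LO_int[OF IM, of Y] YD int_sub[of U M I Y] by blast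
    moreover have "rule_implies r1 r"
      unfolding r1_def rr rule_implies_def using open_max[OF Xo XY] int_sub[of U M I Y] by auto
    ultimately have "r1 = r" using nn by blast
    then have X: "X = ?int Y" and C2: "C = box_obj U M I Y" unfolding r1_def rr by auto
    define r2 where "r2 = ((X, C), (?cl X, dia_obj U N J (?cl X)))"
    have "r2 \<in> rules_II U M I N J"
      unfolding r2_def rules_iff using XC LP_cl[OF JN XU] cl_sup[OF JN XU] by blast
    moreover have "rule_implies r2 r"
      unfolding r2_def rr rule_implies_def using closed_min[OF Ycl XY] cl_sup[OF JN XU] by auto
    ultimately have "r2 = r" using nn by blast
    then have Y: "Y = ?cl X" unfolding r2_def rr by auto
    have YE: "Y \<in> Ext (L_P U N J)" unfolding ExtLP_iff using YU Ycl by blast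
    have inter: "\<Inter> (S2_class U M I N J Y) = Y" using class_inter[OF IM JN YE] X[symmetric] Y[symmetric] by simp
    have "r = ((?int Y, box_obj U M I Y),
      (\<Inter> (S2_class U M I N J Y), dia_obj U N J (\<Inter> (S2_class U M I N J Y))))"
      unfolding inter rr using X C2 D by simp
    then show "r \<in> {((?int X, box_obj U M I X),
      (\<Inter> (S2_class U M I N J X), dia_obj U N J (\<Inter> (S2_class U M I N J X)))) | X.
      X \<in> Ext (L_P U N J)}"
      using YE by blast
  next
    fix r assume "r \<in> {((?int X, box_obj U M I X),
      (\<Inter> (S2_class U M I N J X), dia_obj U N J (\<Inter> (S2_class U M I N J X)))) | X.
      X \<in> Ext (L_P U N J)}"
    then obtain Q where OE: "Q \<in> Ext (L_P U N J)" and
      r0: "r = ((?int Q, box_obj U M I Q),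
      (\<Inter> (S2_class U M I N J Q), dia_obj U N J (\<Inter> (S2_class U M I N J Q))))"
      by blast
    have rr: "r = ((?int Q, box_obj U M I Q), (?cl (?int Q), dia_obj U N J (?cl (?int Q))))"
      using r0 class_inter[OF IM JN OE] by simp
    have OU: "Q \<subseteq> U" and Ocl: "?cl Q = Q" using OE unfolding ExtLP_iff by auto
    let ?X = "?int Q"
    have XU: "?X \<subseteq> U" and XO: "?X \<subseteq> Q" using int_sub[of U M I Q] by auto
    have rin: "r \<in> rules_II U M I N J"
      unfolding rr rules_iff using LO_int[OF IM, of Q] LP_cl[OF JN XU] cl_sup[OF JN XU] by blast
    have "r1 = r" if r1: "r1 \<in> rules_II U M I N J" and imp: "rule_implies r1 r" for r1
    proof -
      obtain X1 C1 Y1 D1 where r1e: "r1 = ((X1, C1), (Y1, D1))" by (metis prod.collapse)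
      have XC: "(X1, C1) \<in> L_O U M I" and YD: "(Y1, D1) \<in> L_P U N J" and XY: "X1 \<subseteq> Y1"
        using r1 unfolding r1e rules_iff by auto
      have C: "C1 = box_obj U M I X1" and Xo: "?int X1 = X1"
        using LO_D[OF XC] by auto
      have D: "D1 = dia_obj U N J Y1" and Ycl: "?cl Y1 = Y1"
        using LP_D[OF YD] by auto
      have i: "?X \<subseteq> X1" "Y1 \<subseteq> ?cl ?X" using imp unfolding r1e rr rule_implies_def by auto
      have "?cl ?X \<subseteq> Q" using closed_min[OF Ocl XO] .
      then have "X1 \<subseteq> Q" using XY i(2) by blast
      then have "X1 \<subseteq> ?X" by (rule open_max[OF Xo])
      then have X1: "X1 = ?X" using i(1) by (rule subset_antisym)
      have "?X \<subseteq> Y1" using XY X1 by simp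
      then have "?cl ?X \<subseteq> Y1" by (rule closed_min[OF Ycl])
      then have Y1: "Y1 = ?cl ?X" using i by blast
      show ?thesis unfolding r1e rr using X1 Y1 C D box_int[OF IM, of Q] by simp
    qed
    then show "r \<in> necessary_rules_II U M I N J"
      unfolding necessary_rules_II_def using rin by blast
  qed
qed

end
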